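(* Let $n$ be a positive integer and $V=\{v_1<v_2<\dots<v_n\}$ a set of $n$ positive integers with $v_n\le n v_1$. Then, with $t=\frac{1}{v_1+v_n}$, one has $\|tv\|\ge\frac{1}{n+1}$ for every $v\in V$; in particular $\kappa(V)\ge\frac{1}{n+1}$. Consequently, for every set $V=\{v_1<\dots<v_n\}$ of positive integers with $n\ge 2$ and every integer $a\ge \frac{v_n-nv_1}{n-1}$, $a\ge 0$, the translate $a+V=\{a+v: v\in V\}$ satisfies $\kappa(a+V)\ge\frac{1}{n+1}$.
   Context: For $x\in\mathbb{R}$, $\|x\|=\min\{x-\lfloor x\rfloor,\lceil x\rceil-x\}$ denotes the distance from $x$ to the nearest integer. For a finite nonempty set $V$ of positive integers, $\kappa(V)=\sup_{t\in(0,1)}\min_{v\in V}\|tv\|$. *)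

theory Defs
  imports Complex_Main
begin

definition dist_int :: "real \<Rightarrow> real" where
  "dist_int x = min (x - of_int \<lfloor>x\<rfloor>) (of_int \<lceil>x\<rceil> - x)"

definition kappa :: "nat set \<Rightarrow> real" where
  "kappa V = (SUP t\<in>{0<..<1::real}. Min ((\<lambda>v. dist_int (t * real v)) ` V))"

end

theory Submission
  imports Defs
begin

lemma dist_int_01: assumes "0 < x" "x < (1::real)" shows "dist_int x = min x (1 - x)"
proof -
  have "\<lfloor>x\<rfloor> = 0" using assms by (simp add: floor_eq_iff)
  moreover have "\<lceil>x\<rceil> = 1" using assms by (simp add: ceiling_eq_iff)
  ultimately show ?thesis by (simp add: dist_int_def)
qed

lemma dist_int_le1: "dist_int x \<le> 1"
  unfolding dist_int_def by linarith

lemma part1: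
  fixes V :: "nat set" and n :: nat
  assumes fin: "finite V" and c: "card V = n" and n1: "n \<ge> 1" and pos: "\<forall>v\<in>V. v > 0"
    and mx: "Max V \<le> n * Min V"
  shows "(\<forall>v\<in>V. dist_int ((1 / real (Min V + Max V)) * real v) \<ge> 1 / (real n + 1))
            \<and> kappa V \<ge> 1 / (real n + 1)"
proof -
  have ne: "V \<noteq> {}" using c n1 by auto
  define m where "m = Min V"
  define M where "M = Max V"
  have mV: "m \<in> V" using fin ne m_def by simp
  have m0: "m > 0" using pos mV by auto
  have mM: "m \<le> M" using fin ne m_def M_def by simp
  have Mn: "real M \<le> real n * real m" using mx M_def m_def
    by (metis of_nat_le_iff of_nat_mult)
  define t where "t = 1 / real (m + M)"
  have s0: "real m + real M > 0" using m0 by simp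
  have key: "dist_int (t * real v) \<ge> 1 / (real n + 1)" if vV: "v \<in> V" for v
  proof -
    have "m \<le> v" "v \<le> M" using fin vV m_def M_def by auto
    hence a: "real m \<le> real v" "real v \<le> real M" by auto
    have tv: "t * real v = real v / (real m + real M)" by (simp add: t_def)
    have lo: "real m / (real m + real M) \<le> t * real v"
      using a s0 tv by (simp add: divide_right_mono)
    have hi: "1 - t * real v \<ge> real m / (real m + real M)"
      using a s0 tv by (simp add: field_simps)
    have p0: "0 < t * real v" using lo m0 s0 by (smt (verit) divide_pos_pos of_nat_0_less_iff)
    have p1: "t * real v < 1" using hi m0 s0 by (smt (verit) divide_pos_pos of_nat_0_less_iff)
    have b: "1 / (real n + 1) \<le> real m / (real m + real M)"
      using Mn m0 s0 by (simp add: field_simps)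
    show ?thesis using dist_int_01[OF p0 p1] lo hi b by linarith
  qed
  have t01: "t \<in> {0<..<1}"
  proof -
    have "real m + real M \<ge> 2" using m0 mM by linarith
    thus ?thesis by (simp add: t_def)
  qed
  have minge: "Min ((\<lambda>v. dist_int (t * real v)) ` V) \<ge> 1 / (real n + 1)"
    using fin ne key by simp
  have bdd: "bdd_above ((\<lambda>t. Min ((\<lambda>v. dist_int (t * real v)) ` V)) ` {0<..<1::real})"
  proof (rule bdd_aboveI[where M=1])
    fix y assume "y \<in> (\<lambda>t. Min ((\<lambda>v. dist_int (t * real v)) ` V)) ` {0<..<1::real}"
    then obtain s where y: "y = Min ((\<lambda>v. dist_int (s * real v)) ` V)" by auto
    have "y \<le> dist_int (s * real m)" using y fin mV by simp
    thus "y \<le> 1" using dist_int_le1 by (meson order_trans)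
  qed
  have "kappa V \<ge> 1 / (real n + 1)"
    unfolding kappa_def using cSUP_upper[OF t01 bdd] minge by linarith
  thus ?thesis using key t_def m_def M_def by auto
qed

theorem mainTheorem5:
  shows "(\<forall>(V::nat set) n. finite V \<and> card V = n \<and> n \<ge> 1 \<and> (\<forall>v\<in>V. v > 0)
            \<and> Max V \<le> n * Min V \<longrightarrow>
            (\<forall>v\<in>V. dist_int ((1 / real (Min V + Max V)) * real v) \<ge> 1 / (real n + 1))
            \<and> kappa V \<ge> 1 / (real n + 1))
       \<and> (\<forall>(V::nat set) n (a::nat). finite V \<and> card V = n \<and> n \<ge> 2 \<and> (\<forall>v\<in>V. v > 0)
            \<and> real a \<ge> (real (Max V) - real n * real (Min V)) / (real n - 1) \<longrightarrow>
            kappa ((\<lambda>v. a + v) ` V) \<ge> 1 / (real n + 1))"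
proof (rule conjI; intro allI impI)
  fix V :: "nat set" and n
  assume "finite V \<and> card V = n \<and> n \<ge> 1 \<and> (\<forall>v\<in>V. v > 0) \<and> Max V \<le> n * Min V"
  thus "(\<forall>v\<in>V. dist_int ((1 / real (Min V + Max V)) * real v) \<ge> 1 / (real n + 1))
            \<and> kappa V \<ge> 1 / (real n + 1)" by (intro part1) auto
next
  fix V :: "nat set" and n and a :: nat
  assume h: "finite V \<and> card V = n \<and> n \<ge> 2 \<and> (\<forall>v\<in>V. v > 0)
            \<and> real a \<ge> (real (Max V) - real n * real (Min V)) / (real n - 1)"
  hence fin: "finite V" and c: "card V = n" and n2: "n \<ge> 2" and pos: "\<forall>v\<in>V. v > 0"
    and ha: "real a \<ge> (real (Max V) - real n * real (Min V)) / (real n - 1)" by auto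
  have ne: "V \<noteq> {}" using c n2 by auto
  let ?W = "(\<lambda>v. a + v) ` V"
  have mono: "mono (\<lambda>v::nat. a + v)" by (simp add: mono_def)
  have minW: "Min ?W = a + Min V" using mono_Min_commute[OF mono fin ne] by simp
  have maxW: "Max ?W = a + Max V" using mono_Max_commute[OF mono fin ne] by simp
  have inj: "inj_on (\<lambda>v. a + v) V" by (simp add: inj_on_def)
  have cW: "card ?W = n" using c card_image[OF inj] by simp
  have n1: "real n - 1 > 0" using n2 by simp
  have "real (Max V) - real n * real (Min V) \<le> real a * (real n - 1)"
    using ha n1 by (simp add: pos_divide_le_eq)
  hence "real (a + Max V) \<le> real n * real (a + Min V)" by (simp add: algebra_simps)
  hence "Max ?W \<le> n * Min ?W" unfolding minW maxW by (metis of_nat_le_iff of_nat_mult)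
  moreover have "finite ?W" "\<forall>v\<in>?W. v > 0" using fin pos by auto
  ultimately show "kappa ?W \<ge> 1 / (real n + 1)" using part1[of ?W n] cW n2 by auto
qed

end
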